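(* Let $\epsilon>0$, $M\ge1$, and let $h^{\mathrm{Dir}}$ be the solution of the Dirichlet problem on ${\mathbb T}^{(M)}$ with the boundary condition $u$ below. Then $$\epsilon^2\,\frac{2^{2M-6}}{(1-2^{-M})^2}\le S_{\mathrm{spr}}(h^{\mathrm{Dir}},{\mathbb T}^{(M)})\le\epsilon^2\,\frac{(2^{M-1}+\tfrac12)^2}{1-2^{-M}}.$$
   Context: Binary tree: for $n\ge0$, $\{0,1\}^n$ is the set of vertices of generation $n$ (words $z=z_1\cdots z_n$; generation $0$ is the root $\emptyset$). For a vertex $z$ of generation $n$, its children are $z0,z1$, and for $0\le m\le n$, $z^{(m)}=z_1\cdots z_m$ is its ancestor in generation $m$. ${\mathbb T}^{(M)}$ is the tree of generations $0,\dots,M$. $S_{\mathrm{spr}}(h,{\mathbb T}^{(M)})=\tfrac12\sum_{n=0}^{M-1}\sum_{z\in\{0,1\}^n}\big[(h(z0)-h(z))^2+(h(z1)-h(z))^2\big]$. Dirichlet problem: given $M\ge1$ and $u:\{0,1\}^M\to\mathbb R$, its solution is the unique $h$ on the vertices of ${\mathbb T}^{(M)}$ with $h(\emptyset)=0$, $h(z)=u(z)$ for $z\in\{0,1\}^M$, and $h(z0)+h(z1)+h(z^{(n-1)})=3h(z)$ for all $z\in\{0,1\}^n$, $1\le n<M$. Boundary condition: $u(z)=\epsilon\sum_{\ell=2}^M2^{M-\ell}z_\ell+\tfrac12\epsilon$ if $z_1=1$, and $u(z)=-\epsilon\sum_{\ell=2}^M2^{M-\ell}z_\ell-\tfrac12\epsilon$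 if $z_1=0$. *)

theory Defs
  imports Complex_Main
begin

text \<open>Vertices of the binary tree are words over {0,1}, represented as bool lists
  (True = 1, False = 0).
  Children of z are z@[False] (= z0) and z@[True] (= z1); the ancestor z^(m) is take m z.\<close>

definition gen :: "nat \<Rightarrow> bool list set" where
  "gen n = {z. length z = n}"

definition tree_vertices :: "nat \<Rightarrow> bool list set" where
  "tree_vertices M = {z. length z \<le> M}"

definition bitval :: "bool \<Rightarrow> real" where
  "bitval b = (if b then 1 else 0)"

definition S_spr :: "(bool list \<Rightarrow> real) \<Rightarrow> nat \<Rightarrow> real" where
  "S_spr h M = (1/2) * (\<Sum>n<M. \<Sum>z\<in>gen n.
      (h (z @ [False]) - h z)\<^sup>2 + (h (z @ [True]) - h z)\<^sup>2)"

definition is_dirichlet_solution ::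
  "nat \<Rightarrow> (bool list \<Rightarrow> real) \<Rightarrow> (bool list \<Rightarrow> real) \<Rightarrow> bool" where
  "is_dirichlet_solution M u h \<longleftrightarrow>
     h [] = 0 \<and>
     (\<forall>z\<in>gen M. h z = u z) \<and>
     (\<forall>n. 1 \<le> n \<and> n < M \<longrightarrow>
        (\<forall>z\<in>gen n. h (z @ [False]) + h (z @ [True]) + h (take (n - 1) z) = 3 * h z))"

definition dirichlet_solution ::
  "nat \<Rightarrow> (bool list \<Rightarrow> real) \<Rightarrow> bool list \<Rightarrow> real" where
  "dirichlet_solution M u = (THE h. is_dirichlet_solution M u h \<and>
       (\<forall>z. z \<notin> tree_vertices M \<longrightarrow> h z = 0))"

text \<open>Boundary condition; z_l is the l-th letter, i.e. z ! (l - 1).\<close>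
definition bdry :: "real \<Rightarrow> nat \<Rightarrow> bool list \<Rightarrow> real" where
  "bdry \<epsilon> M z =
     (if z ! 0 then \<epsilon> * (\<Sum>l=2..M. 2 ^ (M - l) * bitval (z ! (l - 1))) + \<epsilon> / 2
      else - \<epsilon> * (\<Sum>l=2..M. 2 ^ (M - l) * bitval (z ! (l - 1))) - \<epsilon> / 2)"

end

theory Submission
  imports Defs
begin

lemma finite_gen: "finite (gen n)"
  using finite_lists_length_eq[of "UNIV::bool set" n] by (simp add: gen_def)

lemma sum_gen_Suc:
  "(\<Sum>y\<in>gen (Suc n). f y) = (\<Sum>z\<in>gen n. f (z @ [False]) + f (z @ [True]))"
proof -
  have eq: "gen (Suc n) = (\<lambda>z. z @ [False]) ` gen n \<union> (\<lambda>z. z @ [True]) ` gen n"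
  proof
    show "gen (Suc n) \<subseteq> (\<lambda>z. z @ [False]) ` gen n \<union> (\<lambda>z. z @ [True]) ` gen n"
    proof
      fix y assume "y \<in> gen (Suc n)"
      then have l: "length y = Suc n" by (simp add: gen_def)
      then obtain z b where y: "y = z @ [b]" by (metis length_Suc_conv_rev append_Cons append_Nil rev_eq_Cons_iff)
      then have "z \<in> gen n" using l by (simp add: gen_def)
      then show "y \<in> (\<lambda>z. z @ [False]) ` gen n \<union> (\<lambda>z. z @ [True]) ` gen n"
        using y by (cases b) auto
    qed
  qed (auto simp: gen_def)
  have "(\<Sum>y\<in>gen (Suc n). f y) = (\<Sum>y\<in>(\<lambda>z. z @ [False]) ` gen n. f y) + (\<Sum>y\<in>(\<lambda>z. z @ [True]) ` gen n. f y)"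
    unfolding eq by (rule sum.union_disjoint) (auto simp: finite_gen)
  also have "\<dots> = (\<Sum>z\<in>gen n. f (z @ [False])) + (\<Sum>z\<in>gen n. f (z @ [True]))"
    by (subst sum.reindex, simp add: inj_on_def)+ simp
  finally show ?thesis by (simp add: sum.distrib)
qed

lemma card_gen: "(\<Sum>z\<in>gen n. (1::real)) = 2^n"
proof (induction n)
  case 0 then show ?case by (simp add: gen_def)
next
  case (Suc n)
  have "(\<Sum>z\<in>gen (Suc n). (1::real)) = (\<Sum>z\<in>gen n. 1 + 1)" by (rule sum_gen_Suc)
  also have "\<dots> = 2 * (\<Sum>z\<in>gen n. (1::real))" by (simp only: sum.distrib)
  finally show ?case using Suc by simp
qed

definition tt :: "bool \<Rightarrow> real" where "tt b = (if b then 1 else -1)"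
definition TT :: "bool list \<Rightarrow> nat \<Rightarrow> real" where "TT y i = (if i = 0 then 1 else tt (y!i))"

lemma tt_sq[simp]: "tt b * tt b = 1" by (simp add: tt_def)

lemma orth: "i < N \<Longrightarrow> j < N \<Longrightarrow> (\<Sum>y\<in>gen N. TT y i * TT y j) = (if i = j then 2^N else 0)"
proof (induction N arbitrary: i j)
  case 0 then show ?case by simp
next
  case (Suc N)
  have TTs: "TT (z @ [b]) k = (if k < N then TT z k else if k = 0 then 1 else tt b)" if "z \<in> gen N" "k < Suc N" for z b k
    using that by (auto simp: TT_def gen_def nth_append)
  show ?case
  proof (cases "i < N \<and> j < N")
    case True
    have "(\<Sum>y\<in>gen (Suc N). TT y i * TT y j) = (\<Sum>z\<in>gen N. 2 * (TT z i * TT z j))"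
      unfolding sum_gen_Suc using True Suc.prems by (intro sum.cong) (auto simp: TTs)
    also have "\<dots> = 2 * (if i = j then 2^N else 0)" using Suc.IH True by (simp add: sum_distrib_left[symmetric])
    finally show ?thesis by simp
  next
    case False
    then consider "i = N" "j < N" | "j = N" "i < N" | "i = N" "j = N" using Suc.prems by linarith
    then show ?thesis
    proof cases
      case 1
      then have "N > 0" by simp
      then show ?thesis unfolding sum_gen_Suc using 1 by (simp add: TTs tt_def algebra_simps cong: sum.cong)
    next
      case 2
      then have "N > 0" by simp
      then show ?thesis unfolding sum_gen_Suc using 2 by (simp add: TTs tt_def algebra_simps cong: sum.cong)
    next
      case 3
      have "(\<Sum>y\<in>gen (Suc N). TT y i * TT y j) = (\<Sum>z\<in>gen N. 2)"
        unfolding sum_gen_Suc using 3 by (intro sum.cong) (auto simp: TTs)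
      also have "\<dots> = 2 * 2^N" using card_gen[of N] by (simp add: sum_distrib_left[symmetric])
      finally show ?thesis using 3 by simp
    qed
  qed
qed

lemma sq_orth: "(\<Sum>y\<in>gen N. (\<Sum>i<N. c i * TT y i)^2) = 2^N * (\<Sum>i<N. (c i)^2)"
proof -
  have "(\<Sum>y\<in>gen N. (\<Sum>i<N. c i * TT y i)^2) = (\<Sum>y\<in>gen N. \<Sum>i<N. \<Sum>j<N. c i * c j * (TT y i * TT y j))"
    by (simp add: power2_eq_square sum_product algebra_simps)
  also have "\<dots> = (\<Sum>i<N. \<Sum>j<N. c i * c j * (\<Sum>y\<in>gen N. TT y i * TT y j))"
    by (simp add: sum_distrib_left sum.swap[of _ "gen N"])
  also have "\<dots> = (\<Sum>i<N. \<Sum>j<N. c i * c j * (if i = j then 2^N else 0))"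
    by (intro sum.cong refl) (simp add: orth)
  also have "\<dots> = (\<Sum>i<N. c i * c i * 2^N)"
    by (simp add: if_distrib sum.delta cong: if_cong)
  finally show ?thesis by (simp add: power2_eq_square sum_distrib_left algebra_simps)
qed

definition xx :: "nat \<Rightarrow> nat \<Rightarrow> nat \<Rightarrow> real" where
  "xx M i n = (1 - 1/2^(n-i)) / (1 - 1/2^(M-i))"
definition ww :: "nat \<Rightarrow> nat \<Rightarrow> real" where "ww M i = 2^(M-1-i)/2"
definition H :: "real \<Rightarrow> nat \<Rightarrow> bool list \<Rightarrow> real" where
  "H e M z = (if length z \<le> M then e * tt (z!0) * (\<Sum>i<length z. ww M i * xx M i (length z) * TT z i) else 0)"

lemma xx_diag[simp]: "xx M n n = 0" by (simp add: xx_def)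
lemma xx_M: assumes "i < M" shows "xx M i M = 1"
proof -
  have "(1::real) < 2^(M-i)" using assms by (intro one_less_power) auto
  then show ?thesis by (simp add: xx_def)
qed
lemma xx_rec: assumes "i < n" "n < M"
  shows "2 * xx M i (Suc n) + xx M i (n-1) = 3 * xx M i n"
proof -
  obtain k where k: "n = Suc (i + k)" using assms by (metis less_imp_Suc_add)
  obtain m where m: "M - i = Suc m" using assms by (metis Suc_diff_Suc less_trans)
  have "(1::real) < 2^Suc m" by (intro one_less_power) auto
  then have d: "1 - 1/(2::real)^Suc m \<noteq> 0" by simp
  have e: "Suc n - i = Suc (Suc k)" "n - 1 - i = k" "n - i = Suc k" using k by auto
  define a :: real where "a = 2^k"
  have a: "a > 0" by (simp add: a_def)
  have "2*(1 - 1/(4*a)) + (1-1/a) = 3*(1-1/(2*a))" using a by (simp add: field_simps)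
  then have "2*((1 - 1/(4*a))/(1 - 1/2^Suc m)) + (1-1/a)/(1 - 1/2^Suc m) = 3*((1-1/(2*a))/(1 - 1/(2::real)^Suc m))"
    by (metis (no_types, lifting) add_divide_distrib times_divide_eq_right)
  then show ?thesis unfolding xx_def m e a_def by (simp add: mult.assoc)
qed

lemma H_ext: assumes "z \<in> gen n" "n < M"
  shows "H e M z = e * tt ((z@[b])!0) * (\<Sum>i<Suc n. ww M i * xx M i n * TT (z@[b]) i)"
proof (cases "n = 0")
  case True then show ?thesis using assms by (simp add: H_def gen_def)
next
  case False
  have "(\<Sum>i<Suc n. ww M i * xx M i n * TT (z@[b]) i) = (\<Sum>i<n. ww M i * xx M i n * TT z i)"
    using assms by (simp, intro sum.cong) (auto simp: TT_def nth_append gen_def)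
  moreover have "(z@[b])!0 = z!0" using False assms by (simp add: nth_append gen_def)
  ultimately show ?thesis using assms by (simp add: H_def gen_def)
qed

lemma H_child: assumes "z \<in> gen n" "n < M"
  shows "H e M (z@[b]) = e * tt ((z@[b])!0) * (\<Sum>i<Suc n. ww M i * xx M i (Suc n) * TT (z@[b]) i)"
  using assms by (simp add: H_def gen_def)

lemma H_harm: assumes "z \<in> gen n" "1 \<le> n" "n < M"
  shows "H e M (z @ [False]) + H e M (z @ [True]) + H e M (take (n - 1) z) = 3 * H e M z"
proof -
  have z0: "(z@[b])!0 = z!0" for b using assms by (simp add: nth_append gen_def)
  have TTc: "i < n \<Longrightarrow> TT (z@[b]) i = TT z i" for i b using assms by (simp add: TT_def nth_append gen_def)
  have TTn: "TT (z@[b]) n = tt b" for b using assms by (simp add: TT_def nth_append gen_def)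
  have ch: "H e M (z@[b]) = e * tt (z!0) * ((\<Sum>i<n. ww M i * xx M i (Suc n) * TT z i) + ww M n * xx M n (Suc n) * tt b)" for b
    unfolding H_child[OF assms(1,3)] z0 using TTc TTn by simp
  have par: "H e M (take (n - 1) z) = e * tt (z!0) * (\<Sum>i<n. ww M i * xx M i (n-1) * TT z i)"
  proof (cases "n = 1")
    case True then show ?thesis using assms by (simp add: H_def gen_def)
  next
    case False
    have "(\<Sum>i<n. ww M i * xx M i (n-1) * TT z i) = (\<Sum>i<Suc (n-1). ww M i * xx M i (n-1) * TT z i)"
      using assms by simp
    also have "\<dots> = (\<Sum>i<n-1. ww M i * xx M i (n-1) * TT (take (n-1) z) i)"
      unfolding sum.lessThan_Suc using assms False by (simp, intro sum.cong) (auto simp: TT_def gen_def)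
    moreover have "length (take (n-1) z) = n-1" "take (n-1) z ! 0 = z ! 0" using assms False by (auto simp: gen_def)
    ultimately show ?thesis using assms unfolding H_def by simp
  qed
  have me: "H e M z = e * tt (z!0) * (\<Sum>i<n. ww M i * xx M i n * TT z i)" using assms by (simp add: H_def gen_def)
  have "(\<Sum>i<n. ww M i * xx M i (Suc n) * TT z i) * 2 + (\<Sum>i<n. ww M i * xx M i (n-1) * TT z i)
      = 3 * (\<Sum>i<n. ww M i * xx M i n * TT z i)"
    unfolding sum_distrib_right sum_distrib_left sum.distrib[symmetric]
  proof (intro sum.cong refl)
    fix i assume "i \<in> {..<n}"
    then have r: "2 * xx M i (Suc n) + xx M i (n-1) = 3 * xx M i n" using xx_rec[OF _ assms(3)] by simp
    have "ww M i * xx M i (Suc n) * TT z i * 2 + ww M i * xx M i (n - 1) * TT z i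
       = (ww M i * TT z i) * (2 * xx M i (Suc n) + xx M i (n-1))" by (simp add: algebra_simps)
    also have "\<dots> = 3 * (ww M i * xx M i n * TT z i)" unfolding r by simp
    finally show "ww M i * xx M i (Suc n) * TT z i * 2 + ww M i * xx M i (n - 1) * TT z i = 3 * (ww M i * xx M i n * TT z i)" .
  qed
  note eq = this
  have "H e M (z @ [False]) + H e M (z @ [True]) + H e M (take (n - 1) z) =
     e * tt (z!0) * ((\<Sum>i<n. ww M i * xx M i (Suc n) * TT z i) * 2 + (\<Sum>i<n. ww M i * xx M i (n-1) * TT z i))"
    unfolding ch par by (simp add: tt_def algebra_simps)
  also have "\<dots> = 3 * H e M z" unfolding eq me by simp
  finally show ?thesis .
qed

lemma geo: "(\<Sum>k<K. (2::real)^(K - Suc k)) = 2^K - 1"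
proof (induction K)
  case 0 then show ?case by simp
next
  case (Suc K)
  have "(\<Sum>k<K. (2::real)^(Suc K - Suc k)) = 2 * (\<Sum>k<K. (2::real)^(K - Suc k))"
    unfolding sum_distrib_left
  proof (intro sum.cong refl)
    fix x assume "x \<in> {..<K}"
    then have "Suc K - Suc x = Suc (K - Suc x)" by auto
    then show "(2::real)^(Suc K - Suc x) = 2 * 2^(K - Suc x)" by simp
  qed
  then show ?case using Suc by simp
qed

lemma tt_bit: "tt b = 2 * bitval b - 1" by (simp add: tt_def bitval_def)

lemma H_bdry: assumes "z \<in> gen M" "M \<ge> 1" shows "H e M z = bdry e M z"
proof -
  obtain K where K: "M = Suc K" using assms by (cases M) auto
  have l: "length z = M" using assms by (simp add: gen_def)
  define S where "S = (\<Sum>l=2..M. 2 ^ (M - l) * bitval (z ! (l - 1)))"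
  have S: "S = (\<Sum>k<K. 2 ^ (K - Suc k) * bitval (z ! Suc k))"
    unfolding S_def K numeral_2_eq_2 sum.shift_bounds_cl_Suc_ivl sum.atLeast1_atMost_eq by simp
  have "(\<Sum>i<M. ww M i * xx M i M * TT z i) = (\<Sum>i<Suc K. ww M i * TT z i)"
    using K by (simp add: xx_M)
  also have "\<dots> = 2^K/2 + (\<Sum>k<K. 2^(K - Suc k)/2 * tt (z ! Suc k))"
    unfolding sum.lessThan_Suc_shift by (simp add: ww_def TT_def K)
  also have "\<dots> = 2^K/2 + (\<Sum>k<K. 2^(K - Suc k) * bitval (z ! Suc k)) - (\<Sum>k<K. (2::real)^(K - Suc k))/2"
  proof -
    have "(\<Sum>k<K. 2^(K - Suc k)/2 * tt (z ! Suc k)) = (\<Sum>k<K. 2^(K - Suc k) * bitval (z ! Suc k) - (2::real)^(K - Suc k)/2)"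
    proof (intro sum.cong refl)
      fix k
      have a: "(a::real)/2 * (2*b - 1) = a*b - a/2" for a b by (simp add: field_simps)
      show "2^(K - Suc k)/2 * tt (z ! Suc k) = 2^(K - Suc k) * bitval (z ! Suc k) - (2::real)^(K - Suc k)/2"
        unfolding tt_bit by (rule a)
    qed
    then show ?thesis by (simp add: sum_subtractf sum_divide_distrib)
  qed
  also have "\<dots> = S + 1/2" unfolding S geo by (simp add: field_simps)
  finally have "(\<Sum>i<M. ww M i * xx M i M * TT z i) = S + 1/2" .
  then show ?thesis unfolding H_def bdry_def S_def[symmetric] using l by (simp add: tt_def algebra_simps)
qed

lemma maxp:
  fixes g :: "bool list \<Rightarrow> real"
  assumes g0: "g [] = 0" and gM: "\<forall>z\<in>gen M. g z = 0"
    and harm: "\<forall>n. 1 \<le> n \<and> n < M \<longrightarrow> (\<forall>z\<in>gen n. g (z @ [False]) + g (z @ [True]) + g (take (n - 1) z) = 3 * g z)"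
    and nM: "n \<le> M" and z: "z \<in> gen n"
  shows "g z \<le> 0"
proof -
  define a where "a n = Max (g ` gen n)" for n
  have ne: "gen n \<noteq> {}" for n by (auto simp: gen_def intro!: exI[of _ "replicate n False"])
  have amem: "\<exists>z\<in>gen n. g z = a n" for n
    using Max_in[of "g ` gen n"] finite_gen ne unfolding a_def by fastforce
  have ale: "z \<in> gen n \<Longrightarrow> g z \<le> a n" for z n
    unfolding a_def using finite_gen by (intro Max_ge) auto
  have a0: "a 0 = 0" using amem[of 0] g0 by (auto simp: gen_def)
  have aM: "a M = 0" using amem[of M] gM by auto
  have rec: "3 * a n \<le> 2 * a (Suc n) + a (n-1)" if "1 \<le> n" "n < M" for n
  proof -
    obtain z where z: "z \<in> gen n" "g z = a n" using amem by blast
    have "z @ [b] \<in> gen (Suc n)" for b using z by (simp add: gen_def)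
    then have "g (z @ [b]) \<le> a (Suc n)" for b by (rule ale)
    moreover have "take (n-1) z \<in> gen (n-1)" using z that by (simp add: gen_def)
    then have "g (take (n-1) z) \<le> a (n-1)" by (rule ale)
    moreover have "g (z @ [False]) + g (z @ [True]) + g (take (n - 1) z) = 3 * g z"
      using harm that z by blast
    ultimately show ?thesis using z by (smt (verit))
  qed
  have "a m \<le> 0" if "m \<le> M" for m
  proof (rule ccontr)
    assume "\<not> a m \<le> 0"
    then have ex: "\<exists>n. n \<le> M \<and> a n > 0" using that by auto
    define k where "k = (LEAST n. n \<le> M \<and> a n > 0)"
    have k: "k \<le> M" "a k > 0" using LeastI_ex[OF ex] unfolding k_def by auto
    have k0: "k \<noteq> 0" using k a0 by (metis less_irrefl)
    have km: "a (k-1) \<le> 0" using not_less_Least[of "k-1" "\<lambda>n. n \<le> M \<and> a n > 0"] k k0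
      unfolding k_def[symmetric] by linarith
    have "\<forall>j. k + j \<le> M \<longrightarrow> a (k+j) > 0 \<and> a (k+j) > a (k+j-1)"
    proof
      fix j show "k + j \<le> M \<longrightarrow> a (k+j) > 0 \<and> a (k+j) > a (k+j-1)"
      proof (induction j)
        case 0 then show ?case using k km by simp
      next
        case (Suc j)
        show ?case
        proof
          assume h: "k + Suc j \<le> M"
          then have ih: "a (k+j) > 0" "a (k+j) > a (k+j-1)" using Suc by auto
          have "3 * a (k+j) \<le> 2 * a (Suc (k+j)) + a (k+j-1)" using rec[of "k+j"] h k0 by simp
          then show "a (k + Suc j) > 0 \<and> a (k + Suc j) > a (k + Suc j - 1)" using ih by simp
        qed
      qed
    qed
    then have "a (k + (M-k)) > 0" using k(1) by (metis le_add_diff_inverse order_refl)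
    moreover have "k + (M-k) = M" using k by simp
    ultimately show False using aM by simp
  qed
  then show ?thesis using ale[OF z] nM by fastforce
qed

lemma H_sol: assumes "M \<ge> 1" shows "is_dirichlet_solution M (bdry e M) (H e M)"
  unfolding is_dirichlet_solution_def
  using H_bdry[OF _ assms] H_harm by (auto simp: H_def)

lemma sol_unique:
  assumes "is_dirichlet_solution M u h1" "is_dirichlet_solution M u h2" "length z \<le> M"
  shows "h1 z = h2 z"
proof -
  have z: "z \<in> gen (length z)" by (simp add: gen_def)
  have "(\<lambda>z. h1 z - h2 z) z \<le> 0"
    using assms(1,2) by (intro maxp[OF _ _ _ assms(3) z]) (auto simp: is_dirichlet_solution_def algebra_simps)
  moreover have "(\<lambda>z. h2 z - h1 z) z \<le> 0"
    using assms(1,2) by (intro maxp[OF _ _ _ assms(3) z]) (auto simp: is_dirichlet_solution_def algebra_simps)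
  ultimately show ?thesis by simp
qed

lemma dsol: assumes "M \<ge> 1" shows "dirichlet_solution M (bdry e M) = H e M"
  unfolding dirichlet_solution_def
proof (rule the_equality)
  show "is_dirichlet_solution M (bdry e M) (H e M) \<and> (\<forall>z. z \<notin> tree_vertices M \<longrightarrow> H e M z = 0)"
    using H_sol[OF assms] by (auto simp: H_def tree_vertices_def)
next
  fix h assume h: "is_dirichlet_solution M (bdry e M) h \<and> (\<forall>z. z \<notin> tree_vertices M \<longrightarrow> h z = 0)"
  show "h = H e M"
  proof
    fix z show "h z = H e M z"
    proof (cases "length z \<le> M")
      case True then show ?thesis using sol_unique[OF _ H_sol[OF assms]] h by blast
    next
      case False then show ?thesis using h by (auto simp: H_def tree_vertices_def)
    qed
  qed
qed

definition cc :: "nat \<Rightarrow> nat \<Rightarrow> nat \<Rightarrow> real" where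
  "cc M n i = ww M i * (xx M i (Suc n) - xx M i n)"

lemma level: assumes "n < M"
  shows "(\<Sum>z\<in>gen n. (H e M (z@[False]) - H e M z)\<^sup>2 + (H e M (z@[True]) - H e M z)\<^sup>2)
     = e\<^sup>2 * 2^(Suc n) * (\<Sum>i<Suc n. (cc M n i)\<^sup>2)"
proof -
  have "(\<Sum>z\<in>gen n. (H e M (z@[False]) - H e M z)\<^sup>2 + (H e M (z@[True]) - H e M z)\<^sup>2)
      = (\<Sum>y\<in>gen (Suc n). (H e M y - H e M (butlast y))\<^sup>2)"
    unfolding sum_gen_Suc by simp
  also have "\<dots> = (\<Sum>y\<in>gen (Suc n). e\<^sup>2 * (\<Sum>i<Suc n. cc M n i * TT y i)\<^sup>2)"
  proof (intro sum.cong refl)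
    fix y assume y: "y \<in> gen (Suc n)"
    define z b where "z = butlast y" "b = last y"
    have ne: "y \<noteq> []" using y by (auto simp: gen_def)
    have zb: "y = z @ [b]" unfolding z_b_def using ne by simp
    have z: "z \<in> gen n" using y unfolding z_b_def by (simp add: gen_def)
    have "H e M y - H e M (butlast y) = e * tt (y!0) * (\<Sum>i<Suc n. cc M n i * TT y i)"
    proof -
      have "(\<Sum>i<Suc n. ww M i * xx M i (Suc n) * TT y i) - (\<Sum>i<Suc n. ww M i * xx M i n * TT y i)
          = (\<Sum>i<Suc n. cc M n i * TT y i)"
        unfolding sum_subtractf[symmetric] by (intro sum.cong refl) (simp add: cc_def right_diff_distrib left_diff_distrib)
      then show ?thesis
        unfolding zb butlast_snoc H_child[OF z assms] H_ext[OF z assms, of e b]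
        by (simp only: right_diff_distrib[symmetric] zb)
    qed
    moreover have "(tt (y!0))\<^sup>2 = 1" by (simp add: power2_eq_square)
    ultimately show "(H e M y - H e M (butlast y))\<^sup>2 = e\<^sup>2 * (\<Sum>i<Suc n. cc M n i * TT y i)\<^sup>2"
      by (simp add: power_mult_distrib)
  qed
  also have "\<dots> = e\<^sup>2 * 2^(Suc n) * (\<Sum>i<Suc n. (cc M n i)\<^sup>2)"
    unfolding sum_distrib_left[symmetric] sq_orth by simp
  finally show ?thesis .
qed

lemma pow_diff2: "j \<le> m \<Longrightarrow> (2::real)^(m-j) = 2^m/2^j"
  by (simp add: power_diff)

lemma cc_formula: assumes "i \<le> n" "n < M"
  shows "cc M n i = 2^M / (8 * 2^n * (1 - 2^i/2^M))"
proof -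
  have D: "1 - (2::real)^i/2^M \<noteq> 0"
  proof -
    have "(2::real)^i < 2^M" using assms by (intro power_strict_increasing) auto
    then show ?thesis by simp
  qed
  have w: "ww M i = 2^M/(4*2^i)" unfolding ww_def using assms
    by (simp add: pow_diff2 power_Suc[symmetric] del: power_Suc)
  have x1: "xx M i (Suc n) = (1 - 2^i/2^(Suc n))/(1 - 2^i/2^M)" unfolding xx_def using assms
    by (simp add: pow_diff2 del: power_Suc)
  have x2: "xx M i n = (1 - 2^i/2^n)/(1 - 2^i/2^M)" unfolding xx_def using assms
    by (simp add: pow_diff2)
  have gen: "R/(4*p) * ((1 - p/(2*q))/D - (1-p/q)/D) = R/(8*q*D)" if "p > 0" "q > 0" "D \<noteq> 0" for R p q D :: real
  proof -
    have "(1 - p/(2*q))/D - (1-p/q)/D = p/(2*q*D)" using that by (simp add: field_simps)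
    then show ?thesis using that by (simp add: field_simps)
  qed
  show ?thesis unfolding cc_def w x1 x2 using gen[OF _ _ D, of "2^i" "2^n" "2^M"] by simp
qed

lemma sumA: "(\<Sum>n<M. (real n + 1)/2^n) = 4 - (2 * real M + 4)/2^M"
proof (induction M)
  case 0 then show ?case by simp
next
  case (Suc M)
  have "(\<Sum>n<Suc M. (real n + 1)/2^n) = 4 - (2 * real M + 4)/2^M + (real M + 1)/2^M" using Suc by simp
  also have "\<dots> = 4 - (2 * real (Suc M) + 4)/2^(Suc M)" by (simp add: field_simps)
  finally show ?case .
qed

lemma sumB: "(\<Sum>n<M. 1/(2::real)^n) = 2 - 2/2^M"
proof (induction M)
  case 0 then show ?case by simp
next
  case (Suc M)
  have "(\<Sum>n<Suc M. 1/(2::real)^n) = 2 - 2/2^M + 1/2^M" using Suc by simp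
  also have "\<dots> = 2 - 2/2^(Suc M)" by (simp add: field_simps)
  finally show ?case .
qed

lemma S_formula: assumes "M \<ge> 1"
  shows "S_spr (dirichlet_solution M (bdry e M)) M = e\<^sup>2 / 2 * (\<Sum>n<M. 2^(Suc n) * (\<Sum>i<Suc n. (cc M n i)\<^sup>2))"
  unfolding dsol[OF assms] S_spr_def using level by (simp add: sum_distrib_left mult.assoc)

theorem lemma2p5:
  fixes \<epsilon> :: real and M :: nat
  assumes "\<epsilon> > 0" and "M \<ge> 1"
  shows "\<epsilon>\<^sup>2 * ((2::real) powr (2 * real M - 6) / (1 - 2 powr (- real M))\<^sup>2)
           \<le> S_spr (dirichlet_solution M (bdry \<epsilon> M)) M
       \<and> S_spr (dirichlet_solution M (bdry \<epsilon> M)) M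
           \<le> \<epsilon>\<^sup>2 * ((2 ^ (M - 1) + 1/2)\<^sup>2 / (1 - 2 powr (- real M)))"
proof -
  define R :: real where "R = 2^M"
  define D0 where "D0 = 1 - 1/R"
  have R2: "R \<ge> 2" unfolding R_def using assms(2)
    by (metis power_increasing power_one_right numeral_le_iff semiring_norm(69) one_le_numeral)
  have D0: "D0 \<ge> 1/2" "D0 \<le> 1" unfolding D0_def using R2 by (auto simp: field_simps)
  have p1: "(2::real) powr (2 * real M - 6) = R\<^sup>2/64"
  proof -
    have "(2::real) powr (2 * real M - 6) = 2 powr (real (2*M)) / 2 powr 6" by (simp add: powr_diff)
    also have "\<dots> = 2^(2*M) / 2^6" by (simp add: powr_realpow del: of_nat_mult)
    finally show ?thesis unfolding R_def by (simp add: power_mult power2_eq_square power_mult_distrib[symmetric] mult.commute)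
  qed
  have p2: "1 - (2::real) powr (- real M) = D0"
    unfolding D0_def R_def by (simp add: powr_minus powr_realpow divide_inverse)
  have p3: "(2::real)^(M-1) = R/2" unfolding R_def using assms(2) by (simp add: pow_diff2)
  have S: "S_spr (dirichlet_solution M (bdry \<epsilon> M)) M = \<epsilon>\<^sup>2 / 2 * (\<Sum>n<M. 2^(Suc n) * (\<Sum>i<Suc n. (cc M n i)\<^sup>2))"
    by (rule S_formula[OF assms(2)])
  have cc0: "cc M n 0 = R / (8 * 2^n * D0)" if "n < M" for n
    using cc_formula[of 0 n M] that unfolding R_def D0_def by simp
  have ccle: "(cc M n i)\<^sup>2 \<le> (R / (4 * 2^n))\<^sup>2" if "i \<le> n" "n < M" for n i
  proof -
    have "(2::real)^i * 2 \<le> 2^M" using that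
      by (metis power_Suc mult.commute power_increasing Suc_leI le_less_trans one_le_numeral)
    then have Di: "1 - 2^i/R \<ge> 1/2" unfolding R_def by (simp add: field_simps)
    have pos: "0 \<le> R / (8 * 2 ^ n * (1 - 2^i/R))" using Di R2 by simp
    have "R / (8 * 2 ^ n * (1 - 2^i/R)) \<le> R / (8 * 2^n * (1/2))"
      using Di R2 by (intro divide_left_mono mult_left_mono) auto
    then have "R / (8 * 2 ^ n * (1 - 2^i/R)) \<le> R / (4 * 2^n)" by simp
    then show ?thesis using cc_formula[OF that] pos unfolding R_def[symmetric]
      by (intro power_mono) auto
  qed
  have lower: "\<epsilon>\<^sup>2 * (R\<^sup>2 / (32 * D0)) \<le> S_spr (dirichlet_solution M (bdry \<epsilon> M)) M"
  proof -
    have "(\<Sum>n<M. 2^(Suc n) * (R / (8 * 2^n * D0))\<^sup>2) \<le> (\<Sum>n<M. 2^(Suc n) * (\<Sum>i<Suc n. (cc M n i)\<^sup>2))"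
    proof (intro sum_mono mult_left_mono)
      fix n assume "n \<in> {..<M}"
      then have "(R / (8 * 2^n * D0))\<^sup>2 = (cc M n 0)\<^sup>2" using cc0 by simp
      also have "\<dots> \<le> (\<Sum>i<Suc n. (cc M n i)\<^sup>2)" by (rule member_le_sum) auto
      finally show "(R / (8 * 2^n * D0))\<^sup>2 \<le> (\<Sum>i<Suc n. (cc M n i)\<^sup>2)" .
    qed auto
    moreover have "(\<Sum>n<M. 2^(Suc n) * (R / (8 * 2^n * D0))\<^sup>2) = R\<^sup>2 / (32 * D0\<^sup>2) * (\<Sum>n<M. 1/(2::real)^n)"
      unfolding sum_distrib_left using D0 by (intro sum.cong refl) (simp add: field_simps power2_eq_square)
    moreover have "(\<Sum>n<M. 1/(2::real)^n) = 2 * D0" unfolding sumB D0_def R_def by simp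
    ultimately have "R\<^sup>2 / (32 * D0\<^sup>2) * (2 * D0) \<le> (\<Sum>n<M. 2^(Suc n) * (\<Sum>i<Suc n. (cc M n i)\<^sup>2))" by simp
    moreover have "R\<^sup>2 / (32 * D0\<^sup>2) * (2 * D0) = R\<^sup>2 / (16 * D0)" using D0 by (simp add: field_simps power2_eq_square)
    ultimately have "R\<^sup>2 / (16 * D0) \<le> (\<Sum>n<M. 2^(Suc n) * (\<Sum>i<Suc n. (cc M n i)\<^sup>2))" by simp
    then have "\<epsilon>\<^sup>2 / 2 * (R\<^sup>2 / (16 * D0)) \<le> \<epsilon>\<^sup>2 / 2 * (\<Sum>n<M. 2^(Suc n) * (\<Sum>i<Suc n. (cc M n i)\<^sup>2))"
      by (intro mult_left_mono) auto
    moreover have "\<epsilon>\<^sup>2 / 2 * (R\<^sup>2 / (16 * D0)) = \<epsilon>\<^sup>2 * (R\<^sup>2 / (32 * D0))" by simp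
    ultimately show ?thesis unfolding S by simp
  qed
  have upper: "S_spr (dirichlet_solution M (bdry \<epsilon> M)) M \<le> \<epsilon>\<^sup>2 * (R\<^sup>2 / 4)"
  proof -
    have "(\<Sum>n<M. 2^(Suc n) * (\<Sum>i<Suc n. (cc M n i)\<^sup>2)) \<le> (\<Sum>n<M. 2^(Suc n) * (\<Sum>i<Suc n. (R / (4 * 2^n))\<^sup>2))"
      by (intro sum_mono mult_left_mono) (auto intro: ccle)
    also have "\<dots> = R\<^sup>2 / 8 * (\<Sum>n<M. (real n + 1)/2^n)"
      unfolding sum_distrib_left by (intro sum.cong refl) (simp add: field_simps power2_eq_square)
    also have "\<dots> \<le> R\<^sup>2 / 8 * 4" unfolding sumA by (intro mult_left_mono) auto
    finally show ?thesis unfolding S using assms(1) by (simp add: field_simps)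
  qed
  have "\<epsilon>\<^sup>2 * (R\<^sup>2/64 / D0\<^sup>2) \<le> \<epsilon>\<^sup>2 * (R\<^sup>2 / (32 * D0))"
  proof (intro mult_left_mono)
    have "R\<^sup>2/64 / D0\<^sup>2 = R\<^sup>2 / (32 * D0) * (1 / (2 * D0))" using D0 by (simp add: field_simps power2_eq_square)
    also have "\<dots> \<le> R\<^sup>2 / (32 * D0) * 1" using D0 R2 by (intro mult_left_mono) (auto simp: field_simps)
    finally show "R\<^sup>2/64 / D0\<^sup>2 \<le> R\<^sup>2 / (32 * D0)" by simp
  qed simp
  moreover have "\<epsilon>\<^sup>2 * (R\<^sup>2 / 4) \<le> \<epsilon>\<^sup>2 * ((R/2 + 1/2)\<^sup>2 / D0)"
  proof (intro mult_left_mono)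
    have "R\<^sup>2/4 \<le> (R/2 + 1/2)\<^sup>2" using R2 by (simp add: power2_eq_square field_simps)
    also have "\<dots> \<le> (R/2 + 1/2)\<^sup>2 / D0"
    proof -
      have "(R/2 + 1/2)\<^sup>2 * D0 \<le> (R/2 + 1/2)\<^sup>2" using D0 by (intro mult_left_le) auto
      then show ?thesis using D0 by (simp add: le_divide_eq)
    qed
    finally show "R\<^sup>2 / 4 \<le> (R/2 + 1/2)\<^sup>2 / D0" .
  qed simp
  ultimately show ?thesis using lower upper unfolding p1 p2 p3 by linarith
qed

end
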